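(* Assume CH. Then there exists a MAD family $\mathcal{A}\subseteq[\omega]^\omega$ such that (i) $\mathcal{A}$ is a $\lambda$-set, i.e. every countable subset of $\mathcal{A}$ is a relative $G_\delta$ subset of $\mathcal{A}$, and (ii) $\mathcal{A}$ is concentrated on the finite subsets of $\omega$, i.e. every open set $U\subseteq P(\omega)\cong 2^\omega$ containing $[\omega]^{<\omega}$ contains all but countably many elements of $\mathcal{A}$.
   Context: $[\omega]^\omega$ and $[\omega]^{<\omega}$ denote the sets of infinite and finite subsets of $\omega$; $P(\omega)$ is identified with $2^\omega$ via characteristic functions, with the product topology. A MAD family is an infinite set $\mathcal{A}\subseteq[\omega]^\omega$ such that any two distinct elements have finite intersection and every infinite subset of $\omega$ has infinite intersection with some element of $\mathcal{A}$. CH is the continuum hypothesis $2^{\aleph_0}=\aleph_1$. *)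

theory Defs
  imports "HOL-Analysis.Analysis"
begin

definition CH :: bool where
  "CH \<longleftrightarrow> (card_of (UNIV :: nat set set), cardSuc natLeq) \<in> ordIso"

text \<open>Identification of P(omega) with the Cantor space 2^omega via characteristic functions.\<close>
definition chi :: "nat set \<Rightarrow> (nat \<Rightarrow> bool)" where
  "chi A = (\<lambda>n. n \<in> A)"

definition cantor_top :: "(nat \<Rightarrow> bool) topology" where
  "cantor_top = product_topology (\<lambda>_::nat. discrete_topology (UNIV :: bool set)) UNIV"

definition MAD :: "nat set set \<Rightarrow> bool" where
  "MAD \<A> \<longleftrightarrow> infinite \<A> \<and> (\<forall>A\<in>\<A>. infinite A)
     \<and> (\<forall>A\<in>\<A>. \<forall>B\<in>\<A>. A \<noteq> B \<longrightarrow> finite (A \<inter> B))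
     \<and> (\<forall>X. infinite X \<longrightarrow> (\<exists>A\<in>\<A>. infinite (X \<inter> A)))"

definition G_delta_in :: "'a topology \<Rightarrow> 'a set \<Rightarrow> bool" where
  "G_delta_in T G \<longleftrightarrow> (\<exists>U :: nat \<Rightarrow> 'a set. (\<forall>n. openin T (U n)) \<and> G = (\<Inter>n. U n))"

definition lambda_set :: "nat set set \<Rightarrow> bool" where
  "lambda_set \<A> \<longleftrightarrow> (\<forall>\<C>. \<C> \<subseteq> \<A> \<and> countable \<C> \<longrightarrow>
     (\<exists>G. G_delta_in cantor_top G \<and> chi ` \<C> = G \<inter> chi ` \<A>))"

definition concentrated_on_fin :: "nat set set \<Rightarrow> bool" where
  "concentrated_on_fin \<A> \<longleftrightarrow> (\<forall>U. openin cantor_top U \<and> chi ` {A. finite A} \<subseteq> U \<longrightarrow>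
     countable {A \<in> \<A>. chi A \<notin> U})"

end

theory Submission imports Defs begin

context includes cardinal_syntax begin

lemma my_countable_card_of_nat: "countable A \<longleftrightarrow> |A| \<le>o |UNIV::nat set|"
  unfolding countable_def card_of_ordLeq[symmetric] by auto

lemma my_countable_card_le_natLeq: "countable A \<longleftrightarrow> |A| \<le>o natLeq"
  unfolding my_countable_card_of_nat using card_of_nat ordLeq_ordIso_trans ordIso_symmetric by blast

definition WW :: "(nat set \<times> nat set) set" where "WW = |UNIV :: nat set set|"

lemma WW_wo: "Well_order WW" unfolding WW_def by (rule card_of_Well_order)
lemma WW_Field: "Field WW = UNIV" unfolding WW_def by (rule Field_card_of)

lemma WW_wo_rel: "wo_rel WW" using WW_wo by (simp add: wo_rel_def)

lemma WW_refl: "(x, x) \<in> WW"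
  using wo_rel.REFL[OF WW_wo_rel] WW_Field by (simp add: refl_on_def)

lemma WW_total: "x \<noteq> y \<Longrightarrow> (x, y) \<in> WW \<or> (y, x) \<in> WW"
  using wo_rel.TOTALS[OF WW_wo_rel] WW_Field by simp

lemma WW_antisym: "(x, y) \<in> WW \<Longrightarrow> (y, x) \<in> WW \<Longrightarrow> x = y"
  using wo_rel.ANTISYM[OF WW_wo_rel] by (rule antisymD)

lemma WW_trans: "(x, y) \<in> WW \<Longrightarrow> (y, z) \<in> WW \<Longrightarrow> (x, z) \<in> WW"
  using wo_rel.TRANS[OF WW_wo_rel] by (rule transD)

lemma WW_wf: "wf (WW - Id)"
  using WW_wo unfolding well_order_on_def by blast

lemma WW_countable_underS:
  assumes "CH" shows "countable (underS WW x)"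
proof -
  have "|underS WW x| <o WW"
    unfolding WW_def by (rule card_of_underS) (simp_all add: Field_card_of card_of_Card_order[of "UNIV::nat set set", simplified Field_card_of])
  moreover have "WW =o cardSuc natLeq" using assms unfolding CH_def WW_def by simp
  ultimately have "|underS WW x| <o cardSuc natLeq" by (rule ordLess_ordIso_trans)
  then have "|underS WW x| \<le>o natLeq"
    by (rule iffD1[OF cardSuc_ordLeq_ordLess[OF natLeq_Card_order card_of_Card_order]])
  then show ?thesis by (rule iffD2[OF my_countable_card_le_natLeq])
qed

lemma WW_countable_under:
  assumes "CH" shows "countable {y. (y, x) \<in> WW}"
proof -
  have "{y. (y, x) \<in> WW} \<subseteq> insert x (underS WW x)" unfolding underS_def by auto
  then show ?thesis by (rule countable_subset) (rule countable_insert[OF WW_countable_underS[OF assms]])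
qed

lemma uncountable_natsets: "\<not> countable (UNIV :: nat set set)"
proof
  assume "countable (UNIV :: nat set set)"
  then have "range (from_nat_into (UNIV :: nat set set)) = UNIV"
    by (simp add: range_from_nat_into)
  then have "(from_nat_into (UNIV :: nat set set)) ` UNIV = Pow (UNIV :: nat set)" by simp
  moreover from Cantors_theorem[of "UNIV::nat set"] have "\<forall>f :: nat \<Rightarrow> nat set. f ` UNIV \<noteq> Pow UNIV" by simp
  ultimately show False by simp
qed

end


lemma topspace_cantor: "topspace cantor_top = UNIV"
  unfolding cantor_top_def by (simp add: topspace_product_topology)

lemma openin_cantor_coord: "openin cantor_top {y. y j = b}"
proof -
  have "continuous_map cantor_top (discrete_topology (UNIV::bool set)) (\<lambda>x. x j)"
    unfolding cantor_top_def by (rule continuous_map_product_projection) simp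
  then have "openin cantor_top {x \<in> topspace cantor_top. x j \<in> {b}}"
    by (rule openin_continuous_map_preimage) simp
  then show ?thesis by (simp add: topspace_cantor)
qed

lemma openin_cantor_finite:
  assumes "finite F" shows "openin cantor_top {y. \<forall>j\<in>F. y j}"
  using assms
proof (induction F rule: finite_induct)
  case empty
  then show ?case using openin_topspace[of cantor_top] by (simp add: topspace_cantor)
next
  case (insert x F)
  have "{y. \<forall>j\<in>insert x F. y j} = {y. y x = True} \<inter> {y. \<forall>j\<in>F. y j}" by auto
  then show ?case by (simp only:) (rule openin_Int[OF openin_cantor_coord insert.IH])
qed

lemma openin_cantor_nbhd:
  assumes "openin cantor_top U" "z \<in> U"
  shows "\<exists>N. \<forall>y. (\<forall>j<N. y j = z j) \<longrightarrow> y \<in> U"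
proof -
  obtain V where V0: "finite {i\<in>UNIV. V i \<noteq> topspace (discrete_topology (UNIV::bool set))}"
     "\<forall>i\<in>UNIV. openin (discrete_topology UNIV) (V i)" "z \<in> Pi\<^sub>E UNIV V" "Pi\<^sub>E UNIV V \<subseteq> U"
    using assms(1)[unfolded cantor_top_def openin_product_topology_alt, rule_format, OF assms(2)] by blast
  have V: "finite {i. V i \<noteq> UNIV}" "z \<in> Pi\<^sub>E UNIV V" "Pi\<^sub>E UNIV V \<subseteq> U"
    using V0 by simp_all
  define N where "N = Suc (Max ({0} \<union> {i. V i \<noteq> UNIV}))"
  have "\<forall>y. (\<forall>j<N. y j = z j) \<longrightarrow> y \<in> U"
  proof (intro allI impI)
    fix y :: "nat \<Rightarrow> bool" assume h: "\<forall>j<N. y j = z j"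
    have "y \<in> Pi\<^sub>E UNIV V"
    proof -
      have "y i \<in> V i" for i
      proof (cases "V i = UNIV")
        case False
        then have "i \<le> Max ({0} \<union> {i. V i \<noteq> UNIV})" using V(1) by (intro Max_ge) auto
        then have "i < N" unfolding N_def by simp
        then show ?thesis using h V(2) by (auto simp: PiE_def)
      qed simp
      then show ?thesis by (simp add: PiE_def)
    qed
    then show "y \<in> U" using V(3) by blast
  qed
  then show ?thesis by blast
qed

lemma openin_cantor_compl_point: "openin cantor_top (UNIV - {z})"
proof -
  have "UNIV - {z} = (\<Union>j. {y. y j = (\<not> z j)})" by (auto simp: fun_eq_iff)
  moreover have "openin cantor_top (\<Union>j. {y. y j = (\<not> z j)})"
    by (rule openin_Union) (auto simp: openin_cantor_coord)
  ultimately show ?thesis by simp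
qed


definition Gap :: "(nat \<Rightarrow> nat) \<Rightarrow> nat set \<Rightarrow> bool" where
  "Gap f A \<longleftrightarrow> (\<exists>p\<in>A. \<forall>m. p < m \<and> m < f p \<longrightarrow> m \<notin> A)"

primrec nseq :: "nat set \<Rightarrow> (nat \<Rightarrow> nat set) \<Rightarrow> (nat \<Rightarrow> nat \<Rightarrow> nat) \<Rightarrow> nat \<Rightarrow> nat" where
  "nseq Y B fs 0 = (LEAST m. m \<in> Y \<and> m \<notin> B 0)"
| "nseq Y B fs (Suc i) = (LEAST m. m \<in> Y \<and> m \<notin> B (Suc i) \<and> nseq Y B fs i < m \<and> fs i (nseq Y B fs i) \<le> m)"

lemma fusion:
  fixes Y :: "nat set" and D :: "nat \<Rightarrow> nat \<Rightarrow> nat set" and fs :: "nat \<Rightarrow> nat \<Rightarrow> nat"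
  assumes inf: "\<And>i. infinite (Y - (\<Union>j\<le>i. \<Union>k\<le>i. D j k))"
  shows "\<exists>A. infinite A \<and> A \<subseteq> Y \<and> (\<forall>j k. finite (A \<inter> D j k) \<and> card (A \<inter> D j k) \<le> j + k)
           \<and> (\<forall>j. Gap (fs j) A)"
proof -
  define B where "B i = (\<Union>j\<le>i. \<Union>k\<le>i. D j k)" for i
  define n where "n = nseq Y B fs"
  have ex: "\<exists>m. m \<in> Y \<and> m \<notin> B i \<and> b < m" for i b
  proof -
    from inf[of i] have "infinite (Y - B i)" unfolding B_def .
    then obtain m where "m \<in> Y - B i" "m > b" using infinite_nat_iff_unbounded by blast
    then show ?thesis by blast
  qed
  have P0: "n 0 \<in> Y \<and> n 0 \<notin> B 0"
  proof -
    obtain m where "m \<in> Y \<and> m \<notin> B 0" using ex by blast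
    then show ?thesis unfolding n_def nseq.simps by (rule LeastI)
  qed
  have PS: "n (Suc i) \<in> Y \<and> n (Suc i) \<notin> B (Suc i) \<and> n i < n (Suc i) \<and> fs i (n i) \<le> n (Suc i)" for i
  proof -
    obtain m where m: "m \<in> Y \<and> m \<notin> B (Suc i) \<and> max (n i) (fs i (n i)) < m" using ex by blast
    then have "m \<in> Y \<and> m \<notin> B (Suc i) \<and> n i < m \<and> fs i (n i) \<le> m" by simp
    then show ?thesis unfolding n_def nseq.simps by (rule LeastI)
  qed
  have P: "n i \<in> Y \<and> n i \<notin> B i" for i
    using P0 PS by (cases i) auto
  have sm: "strict_mono n" using PS by (simp add: strict_mono_Suc_iff)
  define A where "A = range n"
  have "infinite A" unfolding A_def using sm strict_mono_imp_inj_on range_inj_infinite by blast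
  moreover have "A \<subseteq> Y" unfolding A_def using P by blast
  moreover have "finite (A \<inter> D j k) \<and> card (A \<inter> D j k) \<le> j + k" for j k
  proof -
    have sub: "A \<inter> D j k \<subseteq> n ` {..<max j k}"
    proof
      fix x assume x: "x \<in> A \<inter> D j k"
      then obtain i where i: "x = n i" unfolding A_def by blast
      have "i < max j k"
      proof (rule ccontr)
        assume "\<not> i < max j k"
        then have "j \<le> i" "k \<le> i" by auto
        then have "D j k \<subseteq> B i" unfolding B_def by blast
        then show False using P[of i] x i by blast
      qed
      then show "x \<in> n ` {..<max j k}" using i by blast
    qed
    then have "finite (A \<inter> D j k)" using finite_subset by blast
    moreover have "card (A \<inter> D j k) \<le> card (n ` {..<max j k})" using sub by (simp add: card_mono)
    moreover have "card (n ` {..<max j k}) \<le> max j k" using card_image_le[of "{..<max j k}" n] by simp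
    ultimately show ?thesis by simp
  qed
  moreover have "Gap (fs j) A" for j
    unfolding Gap_def
  proof (intro bexI[of _ "n j"] allI impI)
    fix m assume m: "n j < m \<and> m < fs j (n j)"
    show "m \<notin> A"
    proof
      assume "m \<in> A"
      then obtain i where i: "m = n i" unfolding A_def by blast
      then have "j < i" using m sm strict_mono_less by blast
      then have "n (Suc j) \<le> n i" using sm strict_mono_less_eq by (metis Suc_leI)
      then show False using PS[of j] m i by simp
    qed
  qed (simp add: A_def)
  ultimately show ?thesis by blast
qed



definition Pp :: "nat \<Rightarrow> nat set" where "Pp k = {n. fst (prod_decode n) = k}"

definition Ef :: "(nat set \<Rightarrow> nat set) \<Rightarrow> nat set \<Rightarrow> nat set set" where
  "Ef h Z = range Pp \<union> h ` underS WW Z"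

definition enum :: "(nat set \<Rightarrow> nat set) \<Rightarrow> nat set \<Rightarrow> nat \<Rightarrow> nat set" where
  "enum h X = from_nat_into (Ef h X)"

definition Yf :: "(nat set \<Rightarrow> nat set) \<Rightarrow> nat set \<Rightarrow> nat set" where
  "Yf h Z = (if infinite Z \<and> (\<forall>e\<in>Ef h Z. finite (Z \<inter> e)) then Z else UNIV)"

definition fS :: "nat set \<Rightarrow> nat \<Rightarrow> nat" where
  "fS S p = (LEAST m. prod_encode (p, m) \<notin> S)"

definition Spec :: "(nat set \<Rightarrow> nat set) \<Rightarrow> nat set \<Rightarrow> nat set \<Rightarrow> bool" where
  "Spec h Z A \<longleftrightarrow> infinite A \<and> A \<subseteq> Yf h Z \<and>
     (\<forall>X. (X, Z) \<in> WW \<longrightarrow> (\<exists>n. \<forall>k. finite (A \<inter> enum h X k) \<and> card (A \<inter> enum h X k) < k + n)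
        \<and> Gap (fS X) A)"

definition Fstep :: "(nat set \<Rightarrow> nat set) \<Rightarrow> nat set \<Rightarrow> nat set" where
  "Fstep h Z = (SOME A. Spec h Z A)"

definition aa :: "nat set \<Rightarrow> nat set" where "aa = wfrec (WW - Id) Fstep"

definition Fam :: "nat set set" where "Fam = range Pp \<union> range aa"

lemma Pp_infinite: "infinite (Pp k)"
proof -
  have "range (\<lambda>m. prod_encode (k, m)) \<subseteq> Pp k" unfolding Pp_def by auto
  moreover have "inj (\<lambda>m. prod_encode (k, m))" by (auto simp: inj_def prod_encode_eq)
  ultimately show ?thesis using range_inj_infinite infinite_super by blast
qed

lemma Pp_disj: "j \<noteq> k \<Longrightarrow> Pp j \<inter> Pp k = {}"
  unfolding Pp_def by auto

lemma Pp_inj: "inj Pp"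
proof (rule injI)
  fix j k assume "Pp j = Pp k"
  moreover have "prod_encode (j, 0) \<in> Pp j" unfolding Pp_def by simp
  ultimately have "prod_encode (j, 0) \<in> Pp k" by simp
  then show "j = k" unfolding Pp_def by simp
qed

lemma underS_sub_R: "(X, Z) \<in> WW \<Longrightarrow> y \<in> underS WW X \<Longrightarrow> (y, Z) \<in> WW - Id"
proof -
  assume a: "(X, Z) \<in> WW" "y \<in> underS WW X"
  then have y: "(y, X) \<in> WW" "y \<noteq> X" unfolding underS_def by auto
  have "(y, Z) \<in> WW" using WW_trans y(1) a(1) .
  moreover have "y \<noteq> Z"
  proof
    assume "y = Z"
    then have "X = Z" using WW_antisym a(1) y(1) by simp
    then show False using y \<open>y = Z\<close> by simp
  qed
  ultimately show ?thesis by simp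
qed

lemma underS_mono: "(X, Z) \<in> WW \<Longrightarrow> underS WW X \<subseteq> underS WW Z"
  using underS_sub_R unfolding underS_def by blast

lemma Ef_mono: "(X, Z) \<in> WW \<Longrightarrow> Ef h X \<subseteq> Ef h Z"
  unfolding Ef_def using underS_mono by blast

lemma Ef_cut: "(X, Z) \<in> WW \<Longrightarrow> Ef (cut h (WW - Id) Z) X = Ef h X"
proof -
  assume a: "(X, Z) \<in> WW"
  have "cut h (WW - Id) Z ` underS WW X = h ` underS WW X"
    using underS_sub_R[OF a] by (auto simp: cut_apply)
  then show ?thesis unfolding Ef_def by simp
qed

lemma Spec_cut: "Spec (cut h (WW - Id) Z) Z = Spec h Z"
proof -
  have "enum (cut h (WW - Id) Z) X = enum h X" if "(X, Z) \<in> WW" for X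
    unfolding enum_def using Ef_cut[OF that] by simp
  moreover have "Yf (cut h (WW - Id) Z) Z = Yf h Z"
    unfolding Yf_def using Ef_cut[OF WW_refl] by simp
  ultimately show ?thesis unfolding Spec_def by (intro ext) auto
qed

lemma aa_unfold: "aa Z = Fstep (cut aa (WW - Id) Z) Z"
  unfolding aa_def by (rule wfrec[OF WW_wf])

lemma Ef_countable: "CH \<Longrightarrow> countable (Ef h X)"
  unfolding Ef_def using WW_countable_underS[of X] by simp

lemma Ef_nonempty: "Ef h X \<noteq> {}"
  unfolding Ef_def by blast

lemma range_enum: "CH \<Longrightarrow> range (enum h X) = Ef h X"
  unfolding enum_def by (rule range_from_nat_into[OF Ef_nonempty Ef_countable])

lemma Spec_AD: "CH \<Longrightarrow> Spec h Z A \<Longrightarrow> e \<in> Ef h Z \<Longrightarrow> finite (A \<inter> e)"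
proof -
  assume ch: "CH" and s: "Spec h Z A" and e: "e \<in> Ef h Z"
  from e obtain k where "e = enum h Z k" using range_enum[OF ch, of h Z] by blast
  moreover from s have "\<exists>n. \<forall>k. finite (A \<inter> enum h Z k) \<and> card (A \<inter> enum h Z k) < k + n"
    unfolding Spec_def using WW_refl by blast
  ultimately show ?thesis by blast
qed

lemma avoid:
  assumes ch: "CH" and IH: "\<And>Z'. Z' \<in> underS WW Z \<Longrightarrow> Spec h Z' (h Z')"
    and F: "finite F" "F \<subseteq> Ef h Z"
  shows "infinite (Yf h Z - \<Union>F)"
proof (cases "infinite Z \<and> (\<forall>e\<in>Ef h Z. finite (Z \<inter> e))")
  case True
  then have Y: "Yf h Z = Z" unfolding Yf_def by simp
  have "Z \<inter> \<Union>F = (\<Union>f\<in>F. Z \<inter> f)" by blast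
  moreover have "finite (\<Union>f\<in>F. Z \<inter> f)" using F True by (intro finite_UN_I) auto
  ultimately have fz: "finite (Z \<inter> \<Union>F)" by simp
  have "Z - \<Union>F = Z - (Z \<inter> \<Union>F)" by blast
  moreover have "infinite (Z - (Z \<inter> \<Union>F))" using fz True Diff_infinite_finite by blast
  ultimately show ?thesis using Y by simp
next
  case False
  then have Y: "Yf h Z = UNIV" unfolding Yf_def by auto
  have "infinite (range Pp)" using Pp_inj range_inj_infinite by blast
  then have "\<not> range Pp \<subseteq> F" using F(1) finite_subset by blast
  then obtain m where m: "Pp m \<notin> F" by blast
  have fin: "finite (Pp m \<inter> f)" if f: "f \<in> F" for f
  proof -
    have "f \<in> range Pp \<or> f \<in> h ` underS WW Z" using F(2) f unfolding Ef_def by blast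
    then show ?thesis
    proof
      assume "f \<in> range Pp"
      then obtain k where k: "f = Pp k" by blast
      then have "k \<noteq> m" using m f by blast
      then show ?thesis using Pp_disj k by (simp add: Int_commute)
    next
      assume "f \<in> h ` underS WW Z"
      then obtain Z' where Z': "Z' \<in> underS WW Z" "f = h Z'" by blast
      have "Pp m \<in> Ef h Z'" unfolding Ef_def by blast
      then have "finite (h Z' \<inter> Pp m)" using Spec_AD[OF ch IH[OF Z'(1)]] by blast
      then show ?thesis using Z'(2) by (simp add: Int_commute)
    qed
  qed
  have "Pp m \<inter> \<Union>F = (\<Union>f\<in>F. Pp m \<inter> f)" by blast
  moreover have "finite (\<Union>f\<in>F. Pp m \<inter> f)" using fin F(1) by (intro finite_UN_I) auto
  ultimately have "finite (Pp m \<inter> \<Union>F)" by simp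
  then have "infinite (Pp m - (Pp m \<inter> \<Union>F))" using Pp_infinite Diff_infinite_finite by blast
  moreover have "Pp m - (Pp m \<inter> \<Union>F) \<subseteq> Yf h Z - \<Union>F" using Y by blast
  ultimately show ?thesis using infinite_super by blast
qed

lemma exists_spec:
  assumes ch: "CH" and IH: "\<And>Z'. Z' \<in> underS WW Z \<Longrightarrow> Spec h Z' (h Z')"
  shows "\<exists>A. Spec h Z A"
proof -
  define UZ where "UZ = {X. (X, Z) \<in> WW}"
  have UZc: "countable UZ" unfolding UZ_def using WW_countable_under[OF ch] .
  have UZne: "Z \<in> UZ" unfolding UZ_def using WW_refl by simp
  define xs where "xs = from_nat_into UZ"
  have xsin: "(xs j, Z) \<in> WW" for j
    using from_nat_into[of UZ j] UZne unfolding xs_def UZ_def by blast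
  define D where "D j k = enum h (xs j) k" for j k
  define fs where "fs j = fS (xs j)" for j
  have DE: "D j k \<in> Ef h Z" for j k
  proof -
    have "D j k \<in> Ef h (xs j)" unfolding D_def using range_enum[OF ch, of h "xs j"] by blast
    then show ?thesis using Ef_mono[OF xsin] by blast
  qed
  have inf: "infinite (Yf h Z - (\<Union>j\<le>i. \<Union>k\<le>i. D j k))" for i
  proof -
    let ?F = "(\<lambda>(j, k). D j k) ` ({..i} \<times> {..i})"
    have "(\<Union>j\<le>i. \<Union>k\<le>i. D j k) = \<Union>?F" by auto
    moreover have "finite ?F" by simp
    moreover have "?F \<subseteq> Ef h Z" using DE by auto
    moreover have "infinite (Yf h Z - \<Union>?F)" using avoid[OF ch IH] calculation(2,3) by blast
    ultimately show ?thesis by simp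
  qed
  obtain A where A: "infinite A" "A \<subseteq> Yf h Z"
    "\<forall>j k. finite (A \<inter> D j k) \<and> card (A \<inter> D j k) \<le> j + k" "\<forall>j. Gap (fs j) A"
    using fusion[OF inf] by blast
  have "Spec h Z A"
    unfolding Spec_def
  proof (intro conjI A(1,2) allI impI)
    fix X assume X: "(X, Z) \<in> WW"
    then have "X \<in> UZ" unfolding UZ_def by simp
    then obtain j where j: "xs j = X" unfolding xs_def using from_nat_into_surj[OF UZc] by blast
    have "\<forall>k. finite (A \<inter> enum h X k) \<and> card (A \<inter> enum h X k) < k + Suc j"
    proof
      fix k
      have "finite (A \<inter> D j k) \<and> card (A \<inter> D j k) \<le> j + k" using A(3) by blast
      then show "finite (A \<inter> enum h X k) \<and> card (A \<inter> enum h X k) < k + Suc j"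
        using j unfolding D_def by simp
    qed
    then show "\<exists>n. \<forall>k. finite (A \<inter> enum h X k) \<and> card (A \<inter> enum h X k) < k + n" by blast
    show "Gap (fS X) A" using A(4) j unfolding fs_def by blast
  qed
  then show ?thesis by blast
qed

lemma aa_spec:
  assumes ch: "CH" shows "Spec aa Z (aa Z)"
  using WW_wf
proof (induction Z rule: wf_induct_rule)
  case (less Z)
  have IH: "Spec aa Z' (aa Z')" if "Z' \<in> underS WW Z" for Z'
    using less that unfolding underS_def by blast
  have "\<exists>A. Spec aa Z A" using exists_spec[OF ch IH] by blast
  then have "Spec aa Z (SOME A. Spec aa Z A)" by (rule someI_ex)
  moreover have "aa Z = (SOME A. Spec aa Z A)"
    using aa_unfold[of Z] unfolding Fstep_def Spec_cut by simp
  ultimately show ?case by simp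
qed

lemma aa_infinite: "CH \<Longrightarrow> infinite (aa Z)"
  using aa_spec unfolding Spec_def by blast

lemma Ef_infinite: "CH \<Longrightarrow> e \<in> Ef aa X \<Longrightarrow> infinite e"
  unfolding Ef_def using aa_infinite Pp_infinite by blast

lemma Ef_Fam: "Ef aa X \<subseteq> Fam"
  unfolding Ef_def Fam_def by blast

lemma aa_AD: "CH \<Longrightarrow> e \<in> Ef aa Z \<Longrightarrow> finite (aa Z \<inter> e)"
  using Spec_AD aa_spec by blast

lemma not_underS: "Z \<notin> underS WW X \<Longrightarrow> (X, Z) \<in> WW"
proof (cases "Z = X")
  case True then show ?thesis using WW_refl by simp
next
  case False
  assume "Z \<notin> underS WW X"
  then have "(Z, X) \<notin> WW" using False unfolding underS_def by simp
  then show ?thesis using WW_total[OF False] by simp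
qed

lemma bound:
  assumes ch: "CH" and I: "countable I"
  shows "\<exists>X. I \<subseteq> underS WW X"
proof -
  have "countable (\<Union>s\<in>I. {y. (y, s) \<in> WW})"
    using I WW_countable_under[OF ch] by (intro countable_UN) auto
  then have "(\<Union>s\<in>I. {y. (y, s) \<in> WW}) \<noteq> UNIV" using uncountable_natsets by auto
  then obtain X where X: "X \<notin> (\<Union>s\<in>I. {y. (y, s) \<in> WW})" by blast
  have "I \<subseteq> underS WW X"
  proof
    fix s assume "s \<in> I"
    then have "(X, s) \<notin> WW" using X by blast
    then show "s \<in> underS WW X" using not_underS by blast
  qed
  then show ?thesis by blast
qed

lemma chi_inj: "chi A = chi B \<Longrightarrow> A = B"
  unfolding chi_def by (auto simp: fun_eq_iff)

lemma Fam_MAD: assumes ch: "CH" shows "MAD Fam"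
  unfolding MAD_def
proof (intro conjI ballI allI impI)
  show "infinite Fam"
    using Pp_inj range_inj_infinite infinite_super unfolding Fam_def by blast
next
  fix A assume "A \<in> Fam"
  then show "infinite A" unfolding Fam_def using Pp_infinite aa_infinite[OF ch] by blast
next
  fix A B assume A: "A \<in> Fam" and B: "B \<in> Fam" and AB: "A \<noteq> B"
  have key: "finite (aa Z \<inter> C)" if "C \<in> Fam" "aa Z \<noteq> C" for Z C
  proof -
    from that(1) consider k where "C = Pp k" | Z' where "C = aa Z'" unfolding Fam_def by blast
    then show ?thesis
    proof cases
      case 1
      then have "C \<in> Ef aa Z" unfolding Ef_def by blast
      then show ?thesis using aa_AD[OF ch] by blast
    next
      case 2
      then have "Z' \<noteq> Z" using that(2) by blast
      then consider "(Z', Z) \<in> WW" | "(Z, Z') \<in> WW" using WW_total by blast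
      then show ?thesis
      proof cases
        case 1
        then have "C \<in> Ef aa Z" unfolding Ef_def underS_def using 2 \<open>Z' \<noteq> Z\<close> by blast
        then show ?thesis using aa_AD[OF ch] by blast
      next
        case 2
        then have "aa Z \<in> Ef aa Z'" unfolding Ef_def underS_def using \<open>Z' \<noteq> Z\<close> by blast
        then have "finite (aa Z' \<inter> aa Z)" using aa_AD[OF ch] by blast
        then show ?thesis using \<open>C = aa Z'\<close> by (simp add: Int_commute)
      qed
    qed
  qed
  from A show "finite (A \<inter> B)"
    unfolding Fam_def
  proof
    assume "A \<in> range Pp"
    then obtain j where j: "A = Pp j" by blast
    from B show ?thesis unfolding Fam_def
    proof
      assume "B \<in> range Pp"
      then obtain k where "B = Pp k" by blast
      then show ?thesis using j AB Pp_disj by (cases "j = k") auto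
    next
      assume "B \<in> range aa"
      then obtain Z where "B = aa Z" by blast
      then show ?thesis using key[OF A] AB by (simp add: Int_commute)
    qed
  next
    assume "A \<in> range aa"
    then obtain Z where "A = aa Z" by blast
    then show ?thesis using key[OF B] AB by simp
  qed
next
  fix X :: "nat set" assume X: "infinite X"
  show "\<exists>A\<in>Fam. infinite (X \<inter> A)"
  proof (cases "\<exists>e\<in>Ef aa X. infinite (X \<inter> e)")
    case True
    then show ?thesis using Ef_Fam by blast
  next
    case False
    then have "Yf aa X = X" unfolding Yf_def using X by auto
    then have "aa X \<subseteq> X" using aa_spec[OF ch, of X] unfolding Spec_def by simp
    then have "X \<inter> aa X = aa X" by blast
    moreover have "aa X \<in> Fam" unfolding Fam_def by blast
    ultimately show ?thesis using aa_infinite[OF ch, of X] by (intro bexI[of _ "aa X"]) simp_all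
  qed
qed

lemma fS_surj: "\<exists>S. fS S = f"
proof
  define S where "S = {n. snd (prod_decode n) < f (fst (prod_decode n))}"
  show "fS S = f"
  proof
    fix p
    have "prod_encode (p, m) \<in> S \<longleftrightarrow> m < f p" for m unfolding S_def by simp
    then have "fS S p = (LEAST m. \<not> m < f p)" unfolding fS_def by simp
    also have "\<dots> = f p" by (rule Least_equality) auto
    finally show "fS S p = f p" .
  qed
qed

lemma Fam_conc: assumes ch: "CH" shows "concentrated_on_fin Fam"
  unfolding concentrated_on_fin_def
proof (intro allI impI)
  fix U assume U: "openin cantor_top U \<and> chi ` {A. finite A} \<subseteq> U"
  have "\<exists>N. \<forall>y. (\<forall>j<N. y j = chi x j) \<longrightarrow> y \<in> U" if "finite x" for x
    using openin_cantor_nbhd[of U "chi x"] U that by blast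
  then obtain N where N: "\<And>x y. finite x \<Longrightarrow> (\<forall>j<N x. y j = chi x j) \<Longrightarrow> y \<in> U" by metis
  define f where "f p = Max (N ` Pow {..p})" for p
  have good: "chi A \<in> U" if g: "Gap f A" for A
  proof -
    from g obtain p where p: "p \<in> A" "\<forall>m. p < m \<and> m < f p \<longrightarrow> m \<notin> A" unfolding Gap_def by blast
    define x where "x = A \<inter> {..p}"
    have fx: "finite x" unfolding x_def by simp
    have "N x \<le> f p" unfolding f_def x_def by (intro Max_ge) auto
    have "\<forall>j<N x. chi A j = chi x j"
    proof (intro allI impI)
      fix j assume "j < N x"
      show "chi A j = chi x j"
      proof (cases "j \<le> p")
        case True then show ?thesis unfolding chi_def x_def by simp
      next
        case False
        then have "j \<notin> A" using p(2) \<open>j < N x\<close> \<open>N x \<le> f p\<close> by simp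
        then show ?thesis unfolding chi_def x_def by simp
      qed
    qed
    then show ?thesis using N[OF fx] by blast
  qed
  obtain S where S: "fS S = f" using fS_surj by blast
  have "{A \<in> Fam. chi A \<notin> U} \<subseteq> range Pp \<union> aa ` underS WW S"
  proof
    fix A assume A: "A \<in> {A \<in> Fam. chi A \<notin> U}"
    show "A \<in> range Pp \<union> aa ` underS WW S"
    proof (cases "A \<in> range Pp")
      case False
      then obtain Z where Z: "A = aa Z" using A unfolding Fam_def by blast
      have "Z \<in> underS WW S"
      proof (rule ccontr)
        assume "Z \<notin> underS WW S"
        then have "(S, Z) \<in> WW" by (rule not_underS)
        then have "Gap (fS S) (aa Z)" using aa_spec[OF ch, of Z] unfolding Spec_def by blast
        then show False using good S Z A by auto
      qed
      then show ?thesis using Z by blast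
    qed simp
  qed
  moreover have "countable (range Pp \<union> aa ` underS WW S)"
    using WW_countable_underS[OF ch, of S] by simp
  ultimately show "countable {A \<in> Fam. chi A \<notin> U}" using countable_subset by blast
qed

lemma Fam_lambda: assumes ch: "CH" shows "lambda_set Fam"
  unfolding lambda_set_def
proof (intro allI impI)
  fix C assume C: "C \<subseteq> Fam \<and> countable C"
  define I where "I = (\<lambda>c. SOME Z. aa Z = c) ` (C \<inter> range aa)"
  have "countable I" using C unfolding I_def by simp
  then obtain X where X: "I \<subseteq> underS WW X" using bound[OF ch] by blast
  have CE: "C \<subseteq> Ef aa X"
  proof
    fix c assume c: "c \<in> C"
    show "c \<in> Ef aa X"
    proof (cases "c \<in> range Pp")
      case True then show ?thesis unfolding Ef_def by blast
    next
      case False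
      then have cr: "c \<in> range aa" using C c unfolding Fam_def by blast
      then have "\<exists>Z. aa Z = c" by blast
      then have "aa (SOME Z. aa Z = c) = c" by (rule someI_ex)
      moreover have "(SOME Z. aa Z = c) \<in> I" using c cr unfolding I_def by blast
      ultimately show ?thesis using X unfolding Ef_def by (metis UnI2 image_eqI subsetD)
    qed
  qed
  define E where "E = Ef aa X"
  define e where "e = enum aa X"
  define D where "D = E - C"
  have Dc: "countable D" unfolding D_def E_def using Ef_countable[OF ch, of aa X] countable_subset
    by (metis Diff_subset)
  define U1 where "U1 n = {y. \<exists>k F. finite F \<and> F \<subseteq> e k \<and> k + n \<le> card F \<and> (\<forall>j\<in>F. y j)}" for n
  define H where "H n = (if D = {} then UNIV else UNIV - {chi (from_nat_into D n)})" for n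
  define G where "G = (\<Inter>n. U1 n \<inter> H n)"
  have oU1: "openin cantor_top (U1 n)" for n
  proof -
    have "U1 n = \<Union> {{y. \<forall>j\<in>F. y j} | F. \<exists>k. finite F \<and> F \<subseteq> e k \<and> k + n \<le> card F}"
      unfolding U1_def by blast
    moreover have "openin cantor_top (\<Union> {{y. \<forall>j\<in>F. y j} | F. \<exists>k. finite F \<and> F \<subseteq> e k \<and> k + n \<le> card F})"
      by (rule openin_Union) (auto intro: openin_cantor_finite)
    ultimately show ?thesis by simp
  qed
  have oH: "openin cantor_top (H n)" for n
    unfolding H_def using openin_cantor_compl_point openin_topspace[of cantor_top] topspace_cantor by auto
  have "G_delta_in cantor_top G"
    unfolding G_delta_in_def G_def
    by (rule exI[of _ "\<lambda>n. U1 n \<inter> H n"]) (auto intro: openin_Int oU1 oH)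
  moreover have "chi ` C = G \<inter> chi ` Fam"
  proof
    show "chi ` C \<subseteq> G \<inter> chi ` Fam"
    proof
      fix y assume "y \<in> chi ` C"
      then obtain c where c: "c \<in> C" "y = chi c" by blast
      have cE: "c \<in> E" using CE c unfolding E_def by blast
      have "y \<in> U1 n" for n
      proof -
        obtain k where k: "c = e k" using cE range_enum[OF ch, of aa X] unfolding e_def E_def by blast
        have "infinite c" using Ef_infinite[OF ch] cE unfolding E_def by blast
        then obtain F where F: "F \<subseteq> c" "finite F" "card F = k + n" using infinite_arbitrarily_large by blast
        have "\<forall>j\<in>F. y j" using F(1) c(2) unfolding chi_def by blast
        then have "finite F \<and> F \<subseteq> e k \<and> k + n \<le> card F \<and> (\<forall>j\<in>F. y j)" using F k by simp
        then show ?thesis unfolding U1_def by blast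
      qed
      moreover have "y \<in> H n" for n
      proof (cases "D = {}")
        case False
        have "from_nat_into D n \<in> D" using from_nat_into[OF False] .
        then have "from_nat_into D n \<noteq> c" using c(1) unfolding D_def by blast
        then have "chi (from_nat_into D n) \<noteq> y" using chi_inj c(2) by blast
        then show ?thesis unfolding H_def using False by simp
      qed (simp add: H_def)
      ultimately have "y \<in> G" unfolding G_def by blast
      moreover have "y \<in> chi ` Fam" using c C by blast
      ultimately show "y \<in> G \<inter> chi ` Fam" by blast
    qed
  next
    show "G \<inter> chi ` Fam \<subseteq> chi ` C"
    proof
      fix y assume y: "y \<in> G \<inter> chi ` Fam"
      then obtain A where A: "A \<in> Fam" "y = chi A" by blast
      have AE: "A \<in> E"
      proof (cases "A \<in> range Pp")
        case True then show ?thesis unfolding E_def Ef_def by blast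
      next
        case False
        then obtain Z where Z: "A = aa Z" using A unfolding Fam_def by blast
        show ?thesis
        proof (cases "Z \<in> underS WW X")
          case True then show ?thesis unfolding E_def Ef_def using Z by blast
        next
          case False
          then have "(X, Z) \<in> WW" by (rule not_underS)
          then obtain n where n: "\<forall>k. finite (aa Z \<inter> enum aa X k) \<and> card (aa Z \<inter> enum aa X k) < k + n"
            using aa_spec[OF ch, of Z] unfolding Spec_def by blast
          have "y \<in> U1 n" using y unfolding G_def by blast
          then obtain k F where F: "finite F" "F \<subseteq> e k" "k + n \<le> card F" "\<forall>j\<in>F. y j"
            unfolding U1_def by blast
          have "F \<subseteq> aa Z \<inter> e k" using F(2,4) A(2) Z unfolding chi_def by blast
          moreover have fin: "finite (aa Z \<inter> e k)" and lt: "card (aa Z \<inter> e k) < k + n"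
            using n unfolding e_def by blast+
          ultimately have "card F \<le> card (aa Z \<inter> e k)" by (intro card_mono)
          then show ?thesis using lt F(3) by linarith
        qed
      qed
      have "A \<in> C"
      proof (rule ccontr)
        assume "A \<notin> C"
        then have AD: "A \<in> D" using AE unfolding D_def by blast
        then have Dne: "D \<noteq> {}" by blast
        obtain n where "from_nat_into D n = A" using from_nat_into_surj[OF Dc AD] by blast
        then have "y \<notin> H n" unfolding H_def using Dne A(2) by simp
        then show False using y unfolding G_def by blast
      qed
      then show "y \<in> chi ` C" using A(2) by blast
    qed
  qed
  ultimately show "\<exists>G. G_delta_in cantor_top G \<and> chi ` C = G \<inter> chi ` Fam" by blast
qed

theorem theorem4:
  assumes "CH"
  shows "\<exists>\<A> :: nat set set. MAD \<A> \<and> lambda_set \<A> \<and> concentrated_on_fin \<A>"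
  using Fam_MAD[OF assms] Fam_lambda[OF assms] Fam_conc[OF assms] by blast

end
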